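(* Let $P\subset\mathbb{R}^n$ be a pointed polyhedral set of dimension $n$. Then the base map $\mathrm{base}_P:P\to K_P$ is continuous.
   Context: For a polyhedral set $P$, $\mathrm{char.cone}(P)=\{y:x+y\in P\ \forall x\in P\}$; $P$ is pointed if $\mathrm{char.cone}(P)\cap-\mathrm{char.cone}(P)=\{0\}$. $K_P$ is the convex hull of the vertices of $P$. For $p\in P$, $\mathrm{base}_P(p)$ is the unique point $x\in K_P$ with $p-x\in\mathrm{char.cone}(P)$ minimizing $|p-x|$ among all such points (existence and uniqueness hold for pointed $P$). *)

theory Defs
  imports "HOL-Analysis.Analysis"
begin

definition char_cone :: "'a::real_vector set \<Rightarrow> 'a set" where
  "char_cone P = {y. \<forall>x\<in>P. x + y \<in> P}"

definition pointed :: "'a::real_vector set \<Rightarrow> bool" where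
  "pointed P \<longleftrightarrow> char_cone P \<inter> uminus ` char_cone P = {0}"

definition vertices :: "'a::real_vector set \<Rightarrow> 'a set" where
  "vertices P = {v. v extreme_point_of P}"

definition K :: "'a::real_vector set \<Rightarrow> 'a set" where
  "K P = convex hull (vertices P)"

definition base :: "'a::real_normed_vector set \<Rightarrow> 'a \<Rightarrow> 'a" where
  "base P p = (THE x. x \<in> K P \<and> p - x \<in> char_cone P \<and>
       (\<forall>y\<in>K P. p - y \<in> char_cone P \<longrightarrow> norm (p - x) \<le> norm (p - y)))"

end

theory Submission imports Defs begin

lemma cc_iter:
  assumes "y \<in> char_cone S" "x \<in> S"
  shows "x + real n *\<^sub>R y \<in> S"
proof (induction n)
  case 0 then show ?case using assms by simp
next
  case (Suc n)
  have "x + real n *\<^sub>R y + y \<in> S" using assms(1) Suc by (simp add: char_cone_def)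
  then show ?case by (simp add: algebra_simps)
qed

lemma cc_add: "y1 \<in> char_cone S \<Longrightarrow> y2 \<in> char_cone S \<Longrightarrow> y1 + y2 \<in> char_cone S"
  unfolding char_cone_def by (simp add: add.assoc[symmetric])

lemma cc_zero: "0 \<in> char_cone S"
  unfolding char_cone_def by simp

lemma cc_convex:
  assumes "convex S" "y1 \<in> char_cone S" "y2 \<in> char_cone S" "0 \<le> u" "u \<le> 1"
  shows "u *\<^sub>R y1 + (1 - u) *\<^sub>R y2 \<in> char_cone S"
  unfolding char_cone_def
proof (intro CollectI ballI)
  fix x assume x: "x \<in> S"
  have "x + y1 \<in> S" "x + y2 \<in> S" using assms x unfolding char_cone_def by auto
  then have "u *\<^sub>R (x + y1) + (1 - u) *\<^sub>R (x + y2) \<in> S"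
    using assms(4,5) by (intro convexD[OF assms(1)]) auto
  moreover have "u *\<^sub>R (x + y1) + (1 - u) *\<^sub>R (x + y2) = x + (u *\<^sub>R y1 + (1 - u) *\<^sub>R y2)"
    by (simp add: algebra_simps)
  ultimately show "x + (u *\<^sub>R y1 + (1 - u) *\<^sub>R y2) \<in> S" by simp
qed

lemma recession:
  fixes S :: "'a::real_normed_vector set"
  assumes "closed S" "convex S" "x0 \<in> S" "\<And>n::nat. x0 + real n *\<^sub>R y \<in> S"
  shows "y \<in> char_cone S"
  unfolding char_cone_def
proof (intro CollectI ballI)
  fix x assume x: "x \<in> S"
  define z where "z n = (1 - 1 / real (Suc n)) *\<^sub>R x + (1 / real (Suc n)) *\<^sub>R (x0 + real (Suc n) *\<^sub>R y)" for n
  have zS: "z n \<in> S" for n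
    unfolding z_def using x assms(4)[of "Suc n"]
    by (intro convexD[OF assms(2)]) auto
  have zeq: "z n = (x + y) + (1 / real (Suc n)) *\<^sub>R (x0 - x)" for n
    unfolding z_def scaleR_add_right scaleR_scaleR by (simp add: algebra_simps)
  have "(\<lambda>n. 1 / real (Suc n)) \<longlonglongrightarrow> 0"
    using LIMSEQ_Suc[OF lim_1_over_n] by simp
  then have "(\<lambda>n. (x + y) + (1 / real (Suc n)) *\<^sub>R (x0 - x)) \<longlonglongrightarrow> (x + y) + 0 *\<^sub>R (x0 - x)"
    by (intro tendsto_intros)
  moreover have "z = (\<lambda>n. (x + y) + (1 / real (Suc n)) *\<^sub>R (x0 - x))" using zeq by (intro ext)
  ultimately have "z \<longlonglongrightarrow> x + y" by simp
  then show "x + y \<in> S" using closed_sequentially[OF assms(1), of z, OF zS] by blast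
qed

lemma cc_ray:
  fixes S :: "'a::real_normed_vector set"
  assumes "closed S" "convex S" "p \<in> S" "\<forall>s\<ge>0. p + s *\<^sub>R v \<in> S" "t \<ge> 0"
  shows "t *\<^sub>R v \<in> char_cone S"
proof (rule recession[OF assms(1,2,3)])
  fix n :: nat
  have "p + (real n * t) *\<^sub>R v \<in> S" using assms(4,5) by simp
  then show "p + real n *\<^sub>R t *\<^sub>R v \<in> S" by simp
qed

lemma ray_exit:
  fixes S :: "'a::euclidean_space set"
  assumes "closed S" "convex S" "p \<in> S" "\<And>s. p + s *\<^sub>R u \<in> affine hull S"
  shows "(\<forall>s\<ge>0. p + s *\<^sub>R u \<in> S) \<or> (\<exists>t\<ge>0. p + t *\<^sub>R u \<in> S \<and> p + t *\<^sub>R u \<notin> rel_interior S)"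
proof (cases "\<forall>s\<ge>0. p + s *\<^sub>R u \<in> S")
  case True then show ?thesis by blast
next
  case False
  then obtain t1 where t1: "t1 \<ge> 0" "p + t1 *\<^sub>R u \<notin> S" by blast
  have u0: "u \<noteq> 0" using t1 assms(3) by auto
  define T where "T = {t. 0 \<le> t \<and> p + t *\<^sub>R u \<in> S}"
  have T0: "0 \<in> T" using assms(3) by (simp add: T_def)
  have Tb: "t \<le> t1" if "t \<in> T" for t
  proof (rule ccontr)
    assume "\<not> t \<le> t1"
    then have tt: "t1 < t" "0 < t" using t1 by auto
    have mem: "p + t *\<^sub>R u \<in> S" using that by (simp add: T_def)
    have "(1 - t1 / t) *\<^sub>R p + (t1 / t) *\<^sub>R (p + t *\<^sub>R u) \<in> S"
      using tt t1 by (intro convexD[OF assms(2) assms(3) mem]) (auto simp: field_simps)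
    moreover have "(1 - t1 / t) *\<^sub>R p + (t1 / t) *\<^sub>R (p + t *\<^sub>R u) = p + t1 *\<^sub>R u"
      using tt by (simp add: scaleR_add_right algebra_simps)
    ultimately show False using t1 by simp
  qed
  have bdd: "bdd_above T" using Tb by (auto simp: bdd_above_def)
  have clT: "closed T"
  proof -
    have "closed {t::real. p + t *\<^sub>R u \<in> S}"
      by (rule continuous_closed_vimage[OF assms(1), unfolded vimage_def]) (intro continuous_intros)
    then have "closed ({t::real. 0 \<le> t} \<inter> {t::real. p + t *\<^sub>R u \<in> S})"
      by (intro closed_Int) (auto simp: closed_Collect_le)
    moreover have "T = {t::real. 0 \<le> t} \<inter> {t::real. p + t *\<^sub>R u \<in> S}" by (auto simp: T_def)
    ultimately show ?thesis by simp
  qed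
  define t0 where "t0 = Sup T"
  have t0T: "t0 \<in> T" unfolding t0_def using closed_contains_Sup[OF _ bdd clT] T0 by blast
  have "p + t0 *\<^sub>R u \<notin> rel_interior S"
  proof
    assume "p + t0 *\<^sub>R u \<in> rel_interior S"
    then obtain e where e: "e > 0" "ball (p + t0 *\<^sub>R u) e \<inter> affine hull S \<subseteq> S"
      by (auto simp: mem_rel_interior_ball)
    define t' where "t' = t0 + e / (2 * norm u)"
    have nu: "norm u > 0" using u0 by simp
    have "dist (p + t0 *\<^sub>R u) (p + t' *\<^sub>R u) = e / 2"
    proof -
      have "dist (p + t0 *\<^sub>R u) (p + t' *\<^sub>R u) = norm ((t0 - t') *\<^sub>R u)"
        by (simp add: dist_norm algebra_simps)
      also have "\<dots> = e / 2" using nu e by (simp add: t'_def)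
      finally show ?thesis .
    qed
    then have "p + t' *\<^sub>R u \<in> S" using e assms(4)[of t'] by auto
    moreover have "t' > t0" using nu e by (simp add: t'_def)
    moreover have "t0 \<ge> 0" using t0T by (simp add: T_def)
    ultimately have "t' \<in> T" by (simp add: T_def)
    then have "t' \<le> t0" unfolding t0_def by (rule cSup_upper[OF _ bdd])
    then show False using \<open>t' > t0\<close> by simp
  qed
  then show ?thesis using t0T by (auto simp: T_def)
qed

lemma decomp:
  fixes S :: "'a::euclidean_space set"
  assumes "polyhedron S" "\<forall>y. y \<in> char_cone S \<longrightarrow> -y \<in> char_cone S \<longrightarrow> y = 0" "p \<in> S"
  shows "\<exists>x \<in> convex hull {v. v extreme_point_of S}. p - x \<in> char_cone S"
  using assms
proof (induction "nat (aff_dim S)" arbitrary: S p rule: less_induct)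
  case less
  let ?K = "convex hull {v. v extreme_point_of S}"
  have cl: "closed S" using less.prems(1) by (rule polyhedron_imp_closed)
  have cv: "convex S" using less.prems(1) by (rule polyhedron_imp_convex)
  have face: "\<exists>x\<in>?K. q - x \<in> char_cone S" if q: "q \<in> S" "q \<notin> rel_interior S" for q
  proof -
    have "q \<in> rel_frontier S" using q cl by (simp add: rel_frontier_def closure_closed)
    then obtain F where F: "F face_of S" "F \<noteq> S" "q \<in> F"
      using rel_frontier_of_polyhedron_alt[OF less.prems(1)] by blast
    have polyF: "polyhedron F" using face_of_polyhedron_polyhedron[OF less.prems(1) F(1)] .
    have FS: "F \<subseteq> S" using F(1) by (rule face_of_imp_subset)
    have ccF: "char_cone F \<subseteq> char_cone S"
    proof
      fix y assume y: "y \<in> char_cone F"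
      show "y \<in> char_cone S"
      proof (rule recession[OF cl cv])
        show "q \<in> S" using q by simp
        fix n :: nat show "q + real n *\<^sub>R y \<in> S" using cc_iter[OF y F(3)] FS by blast
      qed
    qed
    have "aff_dim F < aff_dim S" using face_of_aff_dim_lt[OF cv F(1,2)] .
    moreover have "aff_dim F \<ge> 0"
    proof -
      have "aff_dim F \<noteq> -1" using F(3) aff_dim_empty[of F] by auto
      then show ?thesis using aff_dim_geq[of F] by arith
    qed
    ultimately have lt: "nat (aff_dim F) < nat (aff_dim S)" by arith
    have ptF: "\<forall>y. y \<in> char_cone F \<longrightarrow> -y \<in> char_cone F \<longrightarrow> y = 0"
      using ccF less.prems(2) by blast
    obtain x where x: "x \<in> convex hull {v. v extreme_point_of F}" "q - x \<in> char_cone F"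
      using less.hyps[OF lt polyF ptF F(3)] by blast
    have "{v. v extreme_point_of F} \<subseteq> {v. v extreme_point_of S}"
      using extreme_point_of_face[OF F(1)] by blast
    then have "x \<in> ?K" using x(1) hull_mono by blast
    then show ?thesis using x(2) ccF by blast
  qed
  show ?case
  proof (cases "S = {p}")
    case True
    then have "p extreme_point_of S" by simp
    then have "p \<in> ?K" by (intro hull_inc) simp
    then show ?thesis using cc_zero by force
  next
    case False
    then obtain y where y: "y \<in> S" "y \<noteq> p" using less.prems(3) by blast
    define u where "u = y - p"
    have u0: "u \<noteq> 0" using y by (simp add: u_def)
    have aff: "p + s *\<^sub>R u \<in> affine hull S" for s
    proof -
      have "(1 - s) *\<^sub>R p + s *\<^sub>R y \<in> affine hull S"
        by (intro mem_affine[OF affine_affine_hull] hull_inc less.prems(3) y(1)) simp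
      moreover have "(1 - s) *\<^sub>R p + s *\<^sub>R y = p + s *\<^sub>R u" by (simp add: u_def algebra_simps)
      ultimately show ?thesis by simp
    qed
    have aff': "p + s *\<^sub>R (-u) \<in> affine hull S" for s using aff[of "-s"] by simp
    note R1 = ray_exit[OF cl cv less.prems(3) aff]
    note R2 = ray_exit[OF cl cv less.prems(3) aff']
    show ?thesis
    proof (cases "\<forall>s\<ge>0. p + s *\<^sub>R u \<in> S")
      case A1: True
      show ?thesis
      proof (cases "\<forall>s\<ge>0. p + s *\<^sub>R (-u) \<in> S")
        case True
        have "1 *\<^sub>R u \<in> char_cone S" by (rule cc_ray[OF cl cv less.prems(3) A1]) simp
        moreover have "1 *\<^sub>R (-u) \<in> char_cone S" by (rule cc_ray[OF cl cv less.prems(3) True]) simp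
        ultimately have "u = 0" using less.prems(2) by simp
        then show ?thesis using u0 by simp
      next
        case False
        then obtain t where t: "t \<ge> 0" "p + t *\<^sub>R (-u) \<in> S" "p + t *\<^sub>R (-u) \<notin> rel_interior S"
          using R2 by blast
        obtain x where x: "x \<in> ?K" "p + t *\<^sub>R (-u) - x \<in> char_cone S" using face[OF t(2,3)] by blast
        have "t *\<^sub>R u \<in> char_cone S" by (rule cc_ray[OF cl cv less.prems(3) A1 t(1)])
        from cc_add[OF x(2) this] have "p - x \<in> char_cone S" by (simp add: algebra_simps)
        then show ?thesis using x(1) by blast
      qed
    next
      case N1: False
      then obtain t1 where t1: "t1 \<ge> 0" "p + t1 *\<^sub>R u \<in> S" "p + t1 *\<^sub>R u \<notin> rel_interior S"
        using R1 by blast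
      obtain x1 where x1: "x1 \<in> ?K" "p + t1 *\<^sub>R u - x1 \<in> char_cone S" using face[OF t1(2,3)] by blast
      show ?thesis
      proof (cases "\<forall>s\<ge>0. p + s *\<^sub>R (-u) \<in> S")
        case True
        have "t1 *\<^sub>R (-u) \<in> char_cone S" by (rule cc_ray[OF cl cv less.prems(3) True t1(1)])
        from cc_add[OF x1(2) this] have "p - x1 \<in> char_cone S" by (simp add: algebra_simps)
        then show ?thesis using x1(1) by blast
      next
        case False
        then obtain t2 where t2: "t2 \<ge> 0" "p + t2 *\<^sub>R (-u) \<in> S" "p + t2 *\<^sub>R (-u) \<notin> rel_interior S"
          using R2 by blast
        obtain x2 where x2: "x2 \<in> ?K" "p + t2 *\<^sub>R (-u) - x2 \<in> char_cone S" using face[OF t2(2,3)] by blast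
        show ?thesis
        proof (cases "t1 + t2 = 0")
          case True
          then have "t1 = 0" using t1(1) t2(1) by arith
          then show ?thesis using x1 by auto
        next
          case False
          then have pos: "t1 + t2 > 0" using t1(1) t2(1) by arith
          define l where "l = t2 / (t1 + t2)"
          have l01: "0 \<le> l" "l \<le> 1" using pos t1(1) t2(1) by (auto simp: l_def field_simps)
          have "l *\<^sub>R x1 + (1 - l) *\<^sub>R x2 \<in> ?K"
            using l01 by (intro convexD[OF convex_convex_hull x1(1) x2(1)]) auto
          moreover have "l *\<^sub>R (p + t1 *\<^sub>R u - x1) + (1 - l) *\<^sub>R (p + t2 *\<^sub>R (-u) - x2) \<in> char_cone S"
            by (rule cc_convex[OF cv x1(2) x2(2) l01])
          moreover have "l *\<^sub>R (p + t1 *\<^sub>R u - x1) + (1 - l) *\<^sub>R (p + t2 *\<^sub>R (-u) - x2)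
                = p - (l *\<^sub>R x1 + (1 - l) *\<^sub>R x2)"
          proof -
            have "l * t1 - (1 - l) * t2 = 0" using pos by (simp add: l_def field_simps)
            then have "(l * t1) *\<^sub>R u - ((1 - l) * t2) *\<^sub>R u = 0"
              by (metis scaleR_left_diff_distrib scaleR_zero_left)
            then show ?thesis by (simp add: algebra_simps)
          qed
          ultimately show ?thesis by metis
        qed
      qed
    qed
  qed
qed

lemma subspace_bound:
  fixes \<alpha> :: "'i \<Rightarrow> 'a::euclidean_space"
  assumes "finite L"
  shows "\<exists>c\<ge>0. \<forall>v. (\<forall>u. (\<forall>i\<in>L. \<alpha> i \<bullet> u = 0) \<longrightarrow> v \<bullet> u = 0) \<longrightarrow> norm v \<le> c * (\<Sum>i\<in>L. \<bar>\<alpha> i \<bullet> v\<bar>)"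
proof -
  define V where "V = {v. \<forall>u. (\<forall>i\<in>L. \<alpha> i \<bullet> u = 0) \<longrightarrow> v \<bullet> u = 0}"
  define g where "g v = (\<Sum>i\<in>L. \<bar>\<alpha> i \<bullet> v\<bar>)" for v
  have Vscale: "c *\<^sub>R v \<in> V" if "v \<in> V" for c v using that by (simp add: V_def)
  have closedV: "closed V"
  proof -
    have "V = (\<Inter>u\<in>{u. \<forall>i\<in>L. \<alpha> i \<bullet> u = 0}. {v. u \<bullet> v = 0})"
      by (auto simp: V_def inner_commute)
    moreover have "closed (\<Inter>u\<in>{u. \<forall>i\<in>L. \<alpha> i \<bullet> u = 0}. {v. u \<bullet> v = 0})"
      by (intro closed_INT) (simp add: closed_hyperplane)
    ultimately show ?thesis by simp
  qed
  have g0: "v = 0" if "v \<in> V" "g v = 0" for v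
  proof -
    have "\<forall>i\<in>L. \<alpha> i \<bullet> v = 0" using that(2) assms by (simp add: g_def sum_nonneg_eq_0_iff)
    then have "v \<bullet> v = 0" using that(1) by (simp add: V_def)
    then show ?thesis by simp
  qed
  have ghom: "g (c *\<^sub>R v) = \<bar>c\<bar> * g v" for c v
    by (simp add: g_def abs_mult sum_distrib_left)
  show ?thesis
  proof (cases "sphere 0 1 \<inter> V = {}")
    case True
    have "v = 0" if "v \<in> V" for v
    proof (rule ccontr)
      assume "v \<noteq> 0"
      then have "(1 / norm v) *\<^sub>R v \<in> sphere 0 1 \<inter> V" using Vscale[OF that] by simp
      then show False using True by blast
    qed
    then show ?thesis by (intro exI[of _ 0]) (auto simp: V_def)
  next
    case False
    have "compact (sphere (0::'a) 1 \<inter> V)" using closedV by (intro compact_Int_closed) auto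
    moreover have "continuous_on (sphere 0 1 \<inter> V) g" unfolding g_def by (intro continuous_intros)
    ultimately obtain v0 where v0: "v0 \<in> sphere 0 1 \<inter> V" "\<forall>v\<in>sphere 0 1 \<inter> V. g v0 \<le> g v"
      using continuous_attains_inf[OF _ False] by blast
    have gpos: "g v0 > 0"
    proof -
      have "g v0 \<ge> 0" by (simp add: g_def sum_nonneg)
      moreover have "g v0 \<noteq> 0" using g0[of v0] v0(1) by auto
      ultimately show ?thesis by simp
    qed
    show ?thesis
    proof (intro exI[of _ "1 / g v0"] conjI allI impI)
      show "0 \<le> 1 / g v0" using gpos by simp
      fix v assume v: "\<forall>u. (\<forall>i\<in>L. \<alpha> i \<bullet> u = 0) \<longrightarrow> v \<bullet> u = 0"
      then have vV: "v \<in> V" by (simp add: V_def)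
      show "norm v \<le> 1 / g v0 * (\<Sum>i\<in>L. \<bar>\<alpha> i \<bullet> v\<bar>)"
      proof (cases "v = 0")
        case True then show ?thesis by simp
      next
        case False
        then have "(1 / norm v) *\<^sub>R v \<in> sphere 0 1 \<inter> V" using Vscale[OF vV] by simp
        then have "g v0 \<le> g ((1 / norm v) *\<^sub>R v)" using v0(2) by blast
        also have "\<dots> = g v / norm v" using ghom by simp
        finally have "g v0 * norm v \<le> g v" using False by (simp add: field_simps)
        then have "norm v \<le> g v / g v0" using gpos by (simp add: field_simps)
        then show ?thesis by (simp add: g_def)
      qed
    qed
  qed
qed

lemma hoffman:
  fixes \<alpha> :: "'i \<Rightarrow> 'a::euclidean_space"
  assumes "finite J"
  shows "\<exists>c\<ge>0. \<forall>d. (\<exists>w. \<forall>i\<in>J. \<alpha> i \<bullet> w \<le> d i) \<longrightarrow>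
            (\<exists>w. (\<forall>i\<in>J. \<alpha> i \<bullet> w \<le> d i) \<and> norm w \<le> c * (\<Sum>i\<in>J. \<bar>d i\<bar>))"
proof -
  have "\<forall>L\<in>Pow J. \<exists>c. c \<ge> 0 \<and> (\<forall>v. (\<forall>u. (\<forall>i\<in>L. \<alpha> i \<bullet> u = 0) \<longrightarrow> v \<bullet> u = 0) \<longrightarrow> norm v \<le> c * (\<Sum>i\<in>L. \<bar>\<alpha> i \<bullet> v\<bar>))"
  proof
    fix L assume "L \<in> Pow J"
    then have "finite L" using assms finite_subset by auto
    from subspace_bound[OF this, of \<alpha>] show "\<exists>c. c \<ge> 0 \<and> (\<forall>v. (\<forall>u. (\<forall>i\<in>L. \<alpha> i \<bullet> u = 0) \<longrightarrow> v \<bullet> u = 0) \<longrightarrow> norm v \<le> c * (\<Sum>i\<in>L. \<bar>\<alpha> i \<bullet> v\<bar>))"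
      by blast
  qed
  then obtain cf where cf: "\<And>L. L \<in> Pow J \<Longrightarrow> cf L \<ge> 0 \<and> (\<forall>v. (\<forall>u. (\<forall>i\<in>L. \<alpha> i \<bullet> u = 0) \<longrightarrow> v \<bullet> u = 0) \<longrightarrow> norm v \<le> cf L * (\<Sum>i\<in>L. \<bar>\<alpha> i \<bullet> v\<bar>))"
    using bchoice[of "Pow J"] by metis
  define c where "c = (\<Sum>L\<in>Pow J. cf L)"
  have c0: "c \<ge> 0" unfolding c_def using cf by (intro sum_nonneg) auto
  show ?thesis
  proof (intro exI[of _ c] conjI allI impI)
    show "c \<ge> 0" by (rule c0)
    fix d :: "'i \<Rightarrow> real"
    assume "\<exists>w. \<forall>i\<in>J. \<alpha> i \<bullet> w \<le> d i"
    define T where "T = {w. \<forall>i\<in>J. \<alpha> i \<bullet> w \<le> d i}"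
    have Tne: "T \<noteq> {}" using \<open>\<exists>w. _\<close> by (auto simp: T_def)
    have clT: "closed T"
    proof -
      have "T = (\<Inter>i\<in>J. {w. \<alpha> i \<bullet> w \<le> d i})" by (auto simp: T_def)
      moreover have "closed (\<Inter>i\<in>J. {w. \<alpha> i \<bullet> w \<le> d i})"
        by (intro closed_INT) (simp add: closed_halfspace_le)
      ultimately show ?thesis by simp
    qed
    obtain w0 where w0: "w0 \<in> T" "\<And>y. y \<in> T \<Longrightarrow> dist 0 w0 \<le> dist 0 y"
      using distance_attains_inf[OF clT Tne, of 0] by blast
    define J0 where "J0 = {i\<in>J. \<alpha> i \<bullet> w0 = d i}"
    have J0J: "J0 \<subseteq> J" by (auto simp: J0_def)
    have orth: "w0 \<bullet> u = 0" if hu: "\<forall>i\<in>J0. \<alpha> i \<bullet> u = 0" for u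
    proof (rule ccontr)
      assume nz: "w0 \<bullet> u \<noteq> 0"
      define u' where "u' = (w0 \<bullet> u) *\<^sub>R u"
      have pos: "w0 \<bullet> u' > 0" using nz by (auto simp add: u'_def zero_less_mult_iff linorder_neq_iff)
      then have u'0: "u' \<noteq> 0" by auto
      then have uu: "u' \<bullet> u' > 0" by simp
      have hu': "\<forall>i\<in>J0. \<alpha> i \<bullet> u' = 0" using hu by (simp add: u'_def)
      define B where "B = 2 * (w0 \<bullet> u') / (u' \<bullet> u')"
      have Bpos: "B > 0" using pos uu by (simp add: B_def)
      have ev1: "\<forall>i\<in>J - J0. eventually (\<lambda>t. \<alpha> i \<bullet> (w0 - t *\<^sub>R u') < d i) (at_right (0::real))"
      proof
        fix i assume i: "i \<in> J - J0"
        have lt: "\<alpha> i \<bullet> w0 < d i" using i w0(1) by (auto simp: J0_def T_def order.order_iff_strict)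
        have "((\<lambda>t. \<alpha> i \<bullet> (w0 - t *\<^sub>R u')) \<longlongrightarrow> \<alpha> i \<bullet> (w0 - 0 *\<^sub>R u')) (at_right (0::real))"
          by (intro tendsto_intros)
        then show "eventually (\<lambda>t. \<alpha> i \<bullet> (w0 - t *\<^sub>R u') < d i) (at_right (0::real))"
          using lt by (intro order_tendstoD(2)) auto
      qed
      have ev2: "eventually (\<lambda>t. t < B) (at_right (0::real))"
        using Bpos by (intro order_tendstoD(2)[OF tendsto_ident_at]) auto
      have ev: "eventually (\<lambda>t. (\<forall>i\<in>J - J0. \<alpha> i \<bullet> (w0 - t *\<^sub>R u') < d i) \<and> t < B \<and> 0 < t) (at_right (0::real))"
        using eventually_ball_finite[OF _ ev1] assms ev2 eventually_at_right_less[of "0::real"]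
        by (auto intro: eventually_conj)
      obtain t where t: "\<forall>i\<in>J - J0. \<alpha> i \<bullet> (w0 - t *\<^sub>R u') < d i" "t < B" "0 < t"
        using eventually_happens'[OF _ ev] by auto
      have "w0 - t *\<^sub>R u' \<in> T"
        unfolding T_def
      proof (intro CollectI ballI)
        fix i assume i: "i \<in> J"
        show "\<alpha> i \<bullet> (w0 - t *\<^sub>R u') \<le> d i"
        proof (cases "i \<in> J0")
          case True then show ?thesis using hu' by (simp add: J0_def inner_diff_right)
        next
          case False then show ?thesis using t(1) i by (simp add: less_imp_le)
        qed
      qed
      then have "dist 0 w0 \<le> dist 0 (w0 - t *\<^sub>R u')" by (rule w0(2))
      then have "norm w0 \<le> norm (w0 - t *\<^sub>R u')" by simp
      then have le2: "norm w0 ^ 2 \<le> norm (w0 - t *\<^sub>R u') ^ 2" by (simp add: power_mono)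
      have eq2: "norm (w0 - t *\<^sub>R u') ^ 2 = norm w0 ^ 2 - 2 * t * (w0 \<bullet> u') + t * t * (u' \<bullet> u')"
        by (simp add: power2_norm_eq_inner inner_diff_left inner_diff_right inner_commute algebra_simps)
      have "t * (u' \<bullet> u') < 2 * (w0 \<bullet> u')" using t(2) uu by (simp add: B_def field_simps)
      then have "t * t * (u' \<bullet> u') < 2 * t * (w0 \<bullet> u')" using t(3)
        by (metis mult.assoc mult.left_commute mult_less_cancel_left_pos)
      then show False using le2 eq2 by linarith
    qed
    have J0P: "J0 \<in> Pow J" using J0J by simp
    have "norm w0 \<le> cf J0 * (\<Sum>i\<in>J0. \<bar>\<alpha> i \<bullet> w0\<bar>)" using cf[OF J0P] orth by blast
    also have "(\<Sum>i\<in>J0. \<bar>\<alpha> i \<bullet> w0\<bar>) = (\<Sum>i\<in>J0. \<bar>d i\<bar>)" by (intro sum.cong) (auto simp: J0_def)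
    also have "cf J0 * (\<Sum>i\<in>J0. \<bar>d i\<bar>) \<le> c * (\<Sum>i\<in>J. \<bar>d i\<bar>)"
    proof (rule mult_mono)
      show "cf J0 \<le> c" unfolding c_def using J0P cf assms by (intro member_le_sum) auto
      show "(\<Sum>i\<in>J0. \<bar>d i\<bar>) \<le> (\<Sum>i\<in>J. \<bar>d i\<bar>)" using J0J assms by (intro sum_mono2) auto
      show "0 \<le> c" by (rule c0)
      show "0 \<le> (\<Sum>i\<in>J0. \<bar>d i\<bar>)" by (intro sum_nonneg) auto
    qed
    finally show "\<exists>w. (\<forall>i\<in>J. \<alpha> i \<bullet> w \<le> d i) \<and> norm w \<le> c * (\<Sum>i\<in>J. \<bar>d i\<bar>)"
      using w0(1) by (auto simp: T_def)
  qed
qed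

lemma lsc_affine:
  fixes \<alpha> :: "'i \<Rightarrow> 'a::euclidean_space" and \<beta> :: "'i \<Rightarrow> 'b::euclidean_space"
  assumes I: "finite I" and x: "\<forall>i\<in>I. \<alpha> i \<bullet> x \<le> \<beta> i \<bullet> p + \<gamma> i" and e: "e > 0"
  shows "\<exists>\<delta>>0. \<forall>q. dist q p < \<delta> \<longrightarrow> (\<exists>z. \<forall>i\<in>I. \<alpha> i \<bullet> z \<le> \<beta> i \<bullet> q + \<gamma> i) \<longrightarrow>
            (\<exists>x'. (\<forall>i\<in>I. \<alpha> i \<bullet> x' \<le> \<beta> i \<bullet> q + \<gamma> i) \<and> dist x' x < e)"
proof -
  define f where "f i q = \<beta> i \<bullet> q + \<gamma> i" for i q
  define J where "J = {i\<in>I. \<alpha> i \<bullet> x = f i p}"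
  have J: "finite J" "J \<subseteq> I" using I by (auto simp: J_def)
  obtain c where c0: "c \<ge> 0" and c: "\<And>d. (\<exists>w. \<forall>i\<in>J. \<alpha> i \<bullet> w \<le> d i) \<Longrightarrow>
            (\<exists>w. (\<forall>i\<in>J. \<alpha> i \<bullet> w \<le> d i) \<and> norm w \<le> c * (\<Sum>i\<in>J. \<bar>d i\<bar>))"
    using hoffman[OF J(1), of \<alpha>] by blast
  define D where "D q = (\<Sum>i\<in>J. \<bar>f i q - f i p\<bar>)" for q
  have tf: "(f i \<longlongrightarrow> f i p) (nhds p)" for i
    unfolding f_def by (intro tendsto_intros filterlim_ident)
  have tD: "(D \<longlongrightarrow> (\<Sum>i\<in>J. \<bar>f i p - f i p\<bar>)) (nhds p)"
    unfolding D_def by (intro tendsto_intros tf)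
  then have tD0: "(D \<longlongrightarrow> 0) (nhds p)" by simp
  have ev1: "eventually (\<lambda>q. c * D q < e) (nhds p)"
  proof -
    have "((\<lambda>q. c * D q) \<longlongrightarrow> c * 0) (nhds p)" by (intro tendsto_intros tD0)
    then show ?thesis using e by (intro order_tendstoD(2)) auto
  qed
  have ev2: "\<forall>i\<in>I - J. eventually (\<lambda>q. \<alpha> i \<bullet> x < f i q - norm (\<alpha> i) * (c * D q)) (nhds p)"
  proof
    fix i assume i: "i \<in> I - J"
    have lt: "\<alpha> i \<bullet> x < f i p" using i x by (auto simp: J_def f_def order.order_iff_strict)
    have "((\<lambda>q. f i q - norm (\<alpha> i) * (c * D q)) \<longlongrightarrow> f i p - norm (\<alpha> i) * (c * 0)) (nhds p)"
      by (intro tendsto_intros tD0 tf)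
    then show "eventually (\<lambda>q. \<alpha> i \<bullet> x < f i q - norm (\<alpha> i) * (c * D q)) (nhds p)"
      using lt by (intro order_tendstoD(1)) auto
  qed
  have "eventually (\<lambda>q. c * D q < e \<and> (\<forall>i\<in>I - J. \<alpha> i \<bullet> x < f i q - norm (\<alpha> i) * (c * D q))) (nhds p)"
    using ev1 eventually_ball_finite[OF _ ev2] I by (auto intro: eventually_conj)
  then obtain \<delta> where \<delta>: "\<delta> > 0" "\<And>q. dist q p < \<delta> \<Longrightarrow> c * D q < e \<and> (\<forall>i\<in>I - J. \<alpha> i \<bullet> x < f i q - norm (\<alpha> i) * (c * D q))"
    unfolding eventually_nhds_metric by blast
  show ?thesis
  proof (intro exI[of _ \<delta>] conjI allI impI)
    show "\<delta> > 0" by (rule \<delta>(1))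
    fix q assume q: "dist q p < \<delta>" and "\<exists>z. \<forall>i\<in>I. \<alpha> i \<bullet> z \<le> \<beta> i \<bullet> q + \<gamma> i"
    then obtain z where z: "\<forall>i\<in>I. \<alpha> i \<bullet> z \<le> f i q" by (auto simp: f_def)
    have "\<exists>w. \<forall>i\<in>J. \<alpha> i \<bullet> w \<le> f i q - f i p"
    proof (intro exI[of _ "z - x"] ballI)
      fix i assume "i \<in> J"
      then show "\<alpha> i \<bullet> (z - x) \<le> f i q - f i p" using z by (auto simp: J_def inner_diff_right)
    qed
    from c[OF this] obtain w where w: "\<forall>i\<in>J. \<alpha> i \<bullet> w \<le> f i q - f i p" "norm w \<le> c * D q"
      by (auto simp: D_def)
    note qq = \<delta>(2)[OF q]
    show "\<exists>x'. (\<forall>i\<in>I. \<alpha> i \<bullet> x' \<le> \<beta> i \<bullet> q + \<gamma> i) \<and> dist x' x < e"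
    proof (intro exI[of _ "x + w"] conjI ballI)
      show "dist (x + w) x < e" using w(2) qq by (simp add: dist_norm)
      fix i assume i: "i \<in> I"
      show "\<alpha> i \<bullet> (x + w) \<le> \<beta> i \<bullet> q + \<gamma> i"
      proof (cases "i \<in> J")
        case True
        then show ?thesis using w(1) by (auto simp: J_def f_def inner_add_right)
      next
        case False
        have "\<alpha> i \<bullet> w \<le> norm (\<alpha> i) * norm w" by (rule norm_cauchy_schwarz)
        also have "\<dots> \<le> norm (\<alpha> i) * (c * D q)" using w(2) by (intro mult_left_mono) auto
        finally have "\<alpha> i \<bullet> w \<le> norm (\<alpha> i) * (c * D q)" .
        moreover have "\<alpha> i \<bullet> x < f i q - norm (\<alpha> i) * (c * D q)" using qq i False by blast
        ultimately show ?thesis by (simp add: f_def inner_add_right)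
      qed
    qed
  qed
qed

lemma unique_min:
  fixes K C :: "'a::euclidean_space set"
  assumes "convex K" "convex C" "x1 \<in> K" "q - x1 \<in> C" "x2 \<in> K" "q - x2 \<in> C"
    and m1: "\<forall>y\<in>K. q - y \<in> C \<longrightarrow> norm (q - x1) \<le> norm (q - y)"
    and m2: "\<forall>y\<in>K. q - y \<in> C \<longrightarrow> norm (q - x2) \<le> norm (q - y)"
  shows "x1 = x2"
proof -
  define m where "m = (1/2) *\<^sub>R x1 + (1/2) *\<^sub>R x2"
  define a where "a = q - x1"
  define b where "b = q - x2"
  have mK: "m \<in> K" unfolding m_def by (rule convexD[OF assms(1,3,5)]) auto
  have two: "2 *\<^sub>R (q - m) = a + b" unfolding m_def a_def b_def by (simp add: algebra_simps scaleR_2)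
  have 1: "q - m = (1/2) *\<^sub>R (a + b)"
  proof -
    have "q - m = (1/2) *\<^sub>R (2 *\<^sub>R (q - m))" by simp
    then show ?thesis using two by simp
  qed
  have "(1/2) *\<^sub>R a + (1/2) *\<^sub>R b \<in> C" unfolding a_def b_def by (rule convexD[OF assms(2,4,6)]) auto
  then have mC: "q - m \<in> C" unfolding 1 by (simp add: scaleR_add_right)
  have "norm (q - x1) \<le> norm (q - x2)" using m1 assms(5,6) by blast
  moreover have "norm (q - x2) \<le> norm (q - x1)" using m2 assms(3,4) by blast
  ultimately have e12: "norm a = norm b" unfolding a_def b_def by (rule order.antisym)
  have l1: "norm a \<le> norm (q - m)" using m1 mK mC unfolding a_def by blast
  have 2: "x1 - x2 = b - a" unfolding a_def b_def by simp
  have n1: "norm ((1/2) *\<^sub>R (a + b)) ^ 2 = (1/4) * (a \<bullet> a + 2 * (a \<bullet> b) + b \<bullet> b)"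
      unfolding power2_norm_eq_inner inner_scaleR_left inner_scaleR_right inner_add_left inner_add_right
      by (simp add: inner_commute[of b a] algebra_simps)
  have n2: "norm (b - a) ^ 2 = b \<bullet> b - 2 * (a \<bullet> b) + a \<bullet> a"
      unfolding power2_norm_eq_inner inner_diff_left inner_diff_right
      by (simp add: inner_commute[of b a])
  have n3: "norm a ^ 2 = a \<bullet> a" "norm b ^ 2 = b \<bullet> b" by (simp_all add: power2_norm_eq_inner)
  have "norm a ^ 2 \<le> norm (q - m) ^ 2" using l1 by (simp add: power_mono)
  then have "norm (b - a) ^ 2 \<le> 0" unfolding 1 n1 n2 using n3 e12 by simp
  then have "b - a = 0" by simp
  then show ?thesis using 2 by simp
qed

lemma polyhedron_hrep:
  fixes S :: "'a::euclidean_space set"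
  assumes "polyhedron S"
  obtains F :: "'a set set" and a b where "finite F" "\<And>x. x \<in> S \<longleftrightarrow> (\<forall>h\<in>F. a h \<bullet> x \<le> b h)"
proof -
  have "\<exists>F. finite F \<and> S = \<Inter>F \<and> (\<forall>h\<in>F. \<exists>a b. a \<noteq> 0 \<and> h = {x. a \<bullet> x \<le> b})"
    using assms unfolding polyhedron_def .
  then obtain F where F0: "finite F \<and> S = \<Inter>F \<and> (\<forall>h\<in>F. \<exists>a b. a \<noteq> 0 \<and> h = {x. a \<bullet> x \<le> b})"
    by (rule exE)
  then have F: "finite F" "S = \<Inter>F" "\<forall>h\<in>F. \<exists>a b. a \<noteq> 0 \<and> h = {x. a \<bullet> x \<le> b}"
    by blast+
  have "\<forall>h\<in>F. \<exists>r. h = {x. fst r \<bullet> x \<le> snd r}"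
  proof
    fix h assume "h \<in> F"
    have "\<exists>a b. a \<noteq> 0 \<and> h = {x. a \<bullet> x \<le> b}" using bspec[OF F(3) \<open>h \<in> F\<close>] .
    then obtain a b where "h = {x. a \<bullet> x \<le> b}" by (elim exE conjE)
    then show "\<exists>r. h = {x. fst r \<bullet> x \<le> snd r}" by (intro exI[of _ "(a, b)"]) simp
  qed
  from bchoice[OF this] obtain r where r: "\<forall>h\<in>F. h = {x. fst (r h) \<bullet> x \<le> snd (r h)}" by (elim exE)
  define a where "a h = fst (r h)" for h
  define b where "b h = snd (r h)" for h
  have ab: "x \<in> h \<longleftrightarrow> a h \<bullet> x \<le> b h" if "h \<in> F" for h x
  proof -
    have e: "h = {x. fst (r h) \<bullet> x \<le> snd (r h)}" using bspec[OF r that] .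
    then have "x \<in> h \<longleftrightarrow> x \<in> {x. fst (r h) \<bullet> x \<le> snd (r h)}" by (rule arg_cong)
    then show ?thesis by (simp add: a_def b_def)
  qed
  have Peq: "x \<in> S \<longleftrightarrow> (\<forall>h\<in>F. a h \<bullet> x \<le> b h)" for x
  proof
    assume "x \<in> S"
    then show "\<forall>h\<in>F. a h \<bullet> x \<le> b h" using F(2) ab by blast
  next
    assume x: "\<forall>h\<in>F. a h \<bullet> x \<le> b h"
    have "x \<in> h" if "h \<in> F" for h
    proof -
      have "a h \<bullet> x \<le> b h" using x that by blast
      then show ?thesis using ab[OF that] by blast
    qed
    then show "x \<in> S" using F(2) by blast
  qed
  show ?thesis by (rule that[OF F(1) Peq])
qed

theorem mainTheorem10:
  fixes P :: "(real ^ 'n) set"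
  assumes "polyhedron P"
    and "pointed P"
    and "aff_dim P = int CARD('n)"
  shows "continuous_on P (base P)"
proof -
  have Pne: "P \<noteq> {}"
  proof
    assume "P = {}"
    then have "aff_dim P = -1" by simp
    then show False using assms(3) by simp
  qed
  obtain F :: "(real^'n) set set" and a b where F: "finite F"
    and Peq: "\<And>x. x \<in> P \<longleftrightarrow> (\<forall>h\<in>F. a h \<bullet> x \<le> b h)"
    using polyhedron_hrep[OF assms(1)] by blast
  let ?C = "char_cone P"
  have Ceq: "y \<in> ?C \<longleftrightarrow> (\<forall>h\<in>F. a h \<bullet> y \<le> 0)" for y
  proof
    assume y: "y \<in> ?C"
    obtain x0 where x0: "x0 \<in> P" using Pne by blast
    show "\<forall>h\<in>F. a h \<bullet> y \<le> 0"
    proof (intro ballI, rule ccontr)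
      fix h assume h: "h \<in> F" and "\<not> a h \<bullet> y \<le> 0"
      then have pos: "a h \<bullet> y > 0" by simp
      obtain n :: nat where n: "(b h - a h \<bullet> x0) / (a h \<bullet> y) < real n" using reals_Archimedean2 by blast
      have "x0 + real n *\<^sub>R y \<in> P" by (rule cc_iter[OF y x0])
      then have "a h \<bullet> (x0 + real n *\<^sub>R y) \<le> b h" using h Peq by blast
      then have "a h \<bullet> x0 + real n * (a h \<bullet> y) \<le> b h" by (simp add: inner_add_right)
      moreover have "b h - a h \<bullet> x0 < real n * (a h \<bullet> y)" using n pos by (simp add: field_simps)
      ultimately show False by simp
    qed
  next
    assume y: "\<forall>h\<in>F. a h \<bullet> y \<le> 0"
    show "y \<in> ?C" unfolding char_cone_def
    proof (intro CollectI ballI)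
      fix x assume x: "x \<in> P"
      have "a h \<bullet> (x + y) \<le> b h" if h: "h \<in> F" for h
      proof -
        have "a h \<bullet> x \<le> b h" using x h Peq by blast
        moreover have "a h \<bullet> y \<le> 0" using y h by blast
        ultimately show ?thesis by (simp add: inner_add_right)
      qed
      then show "x + y \<in> P" using Peq by blast
    qed
  qed
  have closedC: "closed ?C"
  proof -
    have "?C = (\<Inter>h\<in>F. {y. a h \<bullet> y \<le> 0})" using Ceq by blast
    moreover have "closed (\<Inter>h\<in>F. {y. a h \<bullet> y \<le> (0::real)})"
      by (intro closed_INT) (simp add: closed_halfspace_le)
    ultimately show ?thesis by simp
  qed
  have convC: "convex ?C"
  proof (rule convexI)
    fix x y :: "real^'n" and u v :: real
    assume h: "x \<in> ?C" "y \<in> ?C" "0 \<le> u" "0 \<le> v" "u + v = 1"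
    then have "u \<le> 1" by simp
    from cc_convex[OF polyhedron_imp_convex[OF assms(1)] h(1,2,3) this]
    moreover have "v = 1 - u" using h(5) by simp
    ultimately show "u *\<^sub>R x + v *\<^sub>R y \<in> ?C" by simp
  qed
  have pt: "\<forall>y. y \<in> ?C \<longrightarrow> -y \<in> ?C \<longrightarrow> y = 0"
  proof (intro allI impI)
    fix y assume y: "y \<in> ?C" "-y \<in> ?C"
    have "y \<in> uminus ` ?C" by (rule image_eqI[where x="-y"]) (simp_all add: y)
    then have "y \<in> ?C \<inter> uminus ` ?C" using y by blast
    then show "y = 0" using assms(2) unfolding pointed_def by blast
  qed
  let ?V = "{v. v extreme_point_of P}"
  have finV: "finite ?V" by (rule finite_polyhedron_extreme_points[OF assms(1)])
  have Keq: "K P = convex hull ?V" by (simp add: K_def vertices_def)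
  have Kcomp: "compact (K P)" unfolding Keq by (rule compact_convex_hull[OF finite_imp_compact[OF finV]])
  have Kconv: "convex (K P)" unfolding Keq by (rule convex_convex_hull)
  have Kpoly: "polyhedron (K P)" unfolding Keq by (rule polyhedron_convex_hull[OF finV])
  obtain G :: "(real^'n) set set" and c d where G: "finite G"
    and Kh: "\<And>x. x \<in> K P \<longleftrightarrow> (\<forall>g\<in>G. c g \<bullet> x \<le> d g)"
    using polyhedron_hrep[OF Kpoly] by blast
  define Sset where "Sset q = {x. x \<in> K P \<and> q - x \<in> ?C}" for q
  have Sne: "Sset q \<noteq> {}" if qP: "q \<in> P" for q
  proof -
    obtain x where "x \<in> convex hull ?V" "q - x \<in> ?C" using decomp[OF assms(1) pt qP] by blast
    then show ?thesis by (auto simp: Sset_def Keq)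
  qed
  have Sclosed: "closed (Sset q)" for q
  proof -
    have "Sset q = K P \<inter> (\<lambda>x. q - x) -` ?C" by (auto simp: Sset_def)
    moreover have "closed ((\<lambda>x. q - x) -` ?C)"
      by (rule continuous_closed_vimage[OF closedC]) (intro continuous_intros)
    ultimately show ?thesis using compact_imp_closed[OF Kcomp] by (simp add: closed_Int)
  qed
  have base: "base P q \<in> K P \<and> q - base P q \<in> ?C \<and> (\<forall>y\<in>K P. q - y \<in> ?C \<longrightarrow> norm (q - base P q) \<le> norm (q - y))"
    if q: "q \<in> P" for q
  proof -
    obtain x0 where x0: "x0 \<in> Sset q" "\<And>y. y \<in> Sset q \<Longrightarrow> dist q x0 \<le> dist q y"
      using distance_attains_inf[OF Sclosed Sne[OF q], of q] by blast
    have phi: "x0 \<in> K P \<and> q - x0 \<in> ?C \<and> (\<forall>y\<in>K P. q - y \<in> ?C \<longrightarrow> norm (q - x0) \<le> norm (q - y))"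
      using x0 by (auto simp: Sset_def dist_norm)
    show ?thesis unfolding base_def
    proof (rule theI[of _ x0])
      show "x0 \<in> K P \<and> q - x0 \<in> ?C \<and> (\<forall>y\<in>K P. q - y \<in> ?C \<longrightarrow> norm (q - x0) \<le> norm (q - y))"
        by (rule phi)
      fix x assume x: "x \<in> K P \<and> q - x \<in> ?C \<and> (\<forall>y\<in>K P. q - y \<in> ?C \<longrightarrow> norm (q - x) \<le> norm (q - y))"
      show "x = x0" using unique_min[OF Kconv convC, of x q x0] x phi by blast
    qed
  qed
  define I where "I = Inl ` G \<union> Inr ` F"
  define \<alpha> where "\<alpha> = case_sum c (\<lambda>h. - a h)"
  define \<beta> where "\<beta> = case_sum (\<lambda>g::(real^'n) set. 0 :: real^'n) (\<lambda>h::(real^'n) set. - a h)"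
  define \<gamma> where "\<gamma> = case_sum d (\<lambda>h::(real^'n) set. 0 :: real)"
  have finI: "finite I" using F G by (simp add: I_def)
  have Sq: "x \<in> Sset q \<longleftrightarrow> (\<forall>i\<in>I. \<alpha> i \<bullet> x \<le> \<beta> i \<bullet> q + \<gamma> i)" for q x
  proof -
    have "(\<forall>i\<in>I. \<alpha> i \<bullet> x \<le> \<beta> i \<bullet> q + \<gamma> i) \<longleftrightarrow>
          (\<forall>g\<in>G. c g \<bullet> x \<le> d g) \<and> (\<forall>h\<in>F. - a h \<bullet> x \<le> - a h \<bullet> q)"
    proof
      assume H: "\<forall>i\<in>I. \<alpha> i \<bullet> x \<le> \<beta> i \<bullet> q + \<gamma> i"
      show "(\<forall>g\<in>G. c g \<bullet> x \<le> d g) \<and> (\<forall>h\<in>F. - a h \<bullet> x \<le> - a h \<bullet> q)"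
      proof (intro conjI ballI)
        fix g assume "g \<in> G"
        then have "Inl g \<in> I" by (simp add: I_def)
        from bspec[OF H this] show "c g \<bullet> x \<le> d g" by (simp add: \<alpha>_def \<beta>_def \<gamma>_def)
      next
        fix h assume "h \<in> F"
        then have "Inr h \<in> I" by (simp add: I_def)
        from bspec[OF H this] show "- a h \<bullet> x \<le> - a h \<bullet> q" by (simp add: \<alpha>_def \<beta>_def \<gamma>_def)
      qed
    next
      assume H: "(\<forall>g\<in>G. c g \<bullet> x \<le> d g) \<and> (\<forall>h\<in>F. - a h \<bullet> x \<le> - a h \<bullet> q)"
      show "\<forall>i\<in>I. \<alpha> i \<bullet> x \<le> \<beta> i \<bullet> q + \<gamma> i"
      proof
        fix i assume "i \<in> I"
        then show "\<alpha> i \<bullet> x \<le> \<beta> i \<bullet> q + \<gamma> i" using H by (auto simp: I_def \<alpha>_def \<beta>_def \<gamma>_def)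
      qed
    qed
    moreover have "(\<forall>h\<in>F. - a h \<bullet> x \<le> - a h \<bullet> q) \<longleftrightarrow> q - x \<in> ?C"
      unfolding Ceq by (simp add: inner_diff_right)
    ultimately show ?thesis unfolding Sset_def using Kh by simp
  qed
  have lsc: "\<exists>\<delta>>0. \<forall>q\<in>P. dist q p < \<delta> \<longrightarrow> (\<exists>w'\<in>Sset q. dist w' w < e)"
    if p: "p \<in> P" and w: "w \<in> Sset p" and e: "e > 0" for p w e
  proof -
    have "\<forall>i\<in>I. \<alpha> i \<bullet> w \<le> \<beta> i \<bullet> p + \<gamma> i" using w Sq by blast
    from lsc_affine[OF finI this e] obtain \<delta> where \<delta>: "\<delta> > 0"
      "\<forall>q. dist q p < \<delta> \<longrightarrow> (\<exists>z. \<forall>i\<in>I. \<alpha> i \<bullet> z \<le> \<beta> i \<bullet> q + \<gamma> i) \<longrightarrow>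
            (\<exists>x'. (\<forall>i\<in>I. \<alpha> i \<bullet> x' \<le> \<beta> i \<bullet> q + \<gamma> i) \<and> dist x' w < e)" by blast
    show ?thesis
    proof (intro exI[of _ \<delta>] conjI ballI impI)
      show "\<delta> > 0" by (rule \<delta>(1))
      fix q assume q: "q \<in> P" "dist q p < \<delta>"
      obtain z where "z \<in> Sset q" using Sne[OF q(1)] by blast
      then have "\<exists>z. \<forall>i\<in>I. \<alpha> i \<bullet> z \<le> \<beta> i \<bullet> q + \<gamma> i" using Sq by blast
      then obtain x' where "\<forall>i\<in>I. \<alpha> i \<bullet> x' \<le> \<beta> i \<bullet> q + \<gamma> i" "dist x' w < e" using \<delta>(2) q(2) by blast
      then show "\<exists>w'\<in>Sset q. dist w' w < e" using Sq by blast
    qed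
  qed
  show ?thesis
    unfolding continuous_on_eq_continuous_within
  proof
    fix p assume p: "p \<in> P"
    show "continuous (at p within P) (base P)"
    proof (rule continuous_within_sequentiallyI)
      fix u :: "nat \<Rightarrow> real^'n" assume u: "u \<longlonglongrightarrow> p" "\<forall>n. u n \<in> P"
      show "(\<lambda>n. base P (u n)) \<longlonglongrightarrow> base P p"
      proof (rule ccontr)
        assume nc: "\<not> (\<lambda>n. base P (u n)) \<longlonglongrightarrow> base P p"
        then have "\<not> (\<forall>r>0. \<exists>no. \<forall>n\<ge>no. dist (base P (u n)) (base P p) < r)"
          unfolding lim_sequentially .
        then obtain e where e: "e > 0" "\<forall>N. \<exists>n\<ge>N. \<not> dist (base P (u n)) (base P p) < e"
          by blast
        have "infinite {n. e \<le> dist (base P (u n)) (base P p)}"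
          unfolding infinite_nat_iff_unbounded_le using e(2) by (auto simp: not_less)
        from infinite_enumerate[OF this] obtain r :: "nat \<Rightarrow> nat" where r1: "strict_mono r"
          and r2: "\<forall>n. r n \<in> {n. e \<le> dist (base P (u n)) (base P p)}" by blast
        from r2 have r3: "\<forall>n. e \<le> dist (base P (u (r n))) (base P p)" by simp
        note r = r1 r3
        define y where "y n = base P (u (r n))" for n
        have yK: "\<forall>n. y n \<in> K P" using base u(2) by (simp add: y_def)
        obtain l s where ls: "l \<in> K P" "strict_mono s" "(y \<circ> s) \<longlonglongrightarrow> l"
          using seq_compactE[OF compact_imp_seq_compact[OF Kcomp] yK] by blast
        define v where "v n = u (r (s n))" for n
        have vP: "v n \<in> P" for n using u(2) by (simp add: v_def)
        have vlim: "v \<longlonglongrightarrow> p"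
        proof -
          have "(u \<circ> (r \<circ> s)) \<longlonglongrightarrow> p" by (rule LIMSEQ_subseq_LIMSEQ[OF u(1) strict_mono_o[OF r(1) ls(2)]])
          moreover have "u \<circ> (r \<circ> s) = v" by (simp add: v_def fun_eq_iff)
          ultimately show ?thesis by simp
        qed
        have ys: "(y \<circ> s) n = base P (v n)" for n by (simp add: y_def v_def)
        have lC: "p - l \<in> ?C"
        proof (rule closed_sequentially[OF closedC])
          show "v n - (y \<circ> s) n \<in> ?C" for n using base[OF vP[of n]] ys[of n] by simp
          show "(\<lambda>n. v n - (y \<circ> s) n) \<longlonglongrightarrow> p - l" by (intro tendsto_intros vlim ls(3))
        qed
        have lmin: "\<forall>w\<in>K P. p - w \<in> ?C \<longrightarrow> norm (p - l) \<le> norm (p - w)"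
        proof (intro ballI impI)
          fix w assume w: "w \<in> K P" "p - w \<in> ?C"
          then have wS: "w \<in> Sset p" by (simp add: Sset_def)
          show "norm (p - l) \<le> norm (p - w)"
          proof (rule field_le_epsilon)
            fix \<eta> :: real assume \<eta>: "\<eta> > 0"
            obtain \<delta> where \<delta>: "\<delta> > 0" "\<forall>q\<in>P. dist q p < \<delta> \<longrightarrow> (\<exists>w'\<in>Sset q. dist w' w < \<eta>)"
              using lsc[OF p wS \<eta>] by blast
            have ev: "eventually (\<lambda>n. dist (v n) p < \<delta>) sequentially" using vlim \<delta>(1) by (rule tendstoD)
            have ev2: "eventually (\<lambda>n. norm (v n - (y \<circ> s) n) \<le> norm (v n - w) + \<eta>) sequentially"
            proof (rule eventually_mono[OF ev])
              fix n assume dn: "dist (v n) p < \<delta>"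
              obtain w' where w': "w' \<in> Sset (v n)" "dist w' w < \<eta>" using \<delta>(2) vP[of n] dn by blast
              have "norm (v n - (y \<circ> s) n) \<le> norm (v n - w')"
                using base[OF vP[of n]] w'(1) ys[of n] by (simp add: Sset_def)
              also have "norm (v n - w') = norm ((v n - w) + (w - w'))" by simp
              also have "\<dots> \<le> norm (v n - w) + norm (w - w')" by (rule norm_triangle_ineq)
              also have "norm (w - w') < \<eta>" using w'(2) by (simp add: dist_norm norm_minus_commute)
              finally show "norm (v n - (y \<circ> s) n) \<le> norm (v n - w) + \<eta>" by simp
            qed
            have t1: "(\<lambda>n. norm (v n - (y \<circ> s) n)) \<longlonglongrightarrow> norm (p - l)" by (intro tendsto_intros vlim ls(3))
            have t2: "(\<lambda>n. norm (v n - w) + \<eta>) \<longlonglongrightarrow> norm (p - w) + \<eta>" by (intro tendsto_intros vlim)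
            show "norm (p - l) \<le> norm (p - w) + \<eta>"
              by (rule tendsto_le[OF trivial_limit_sequentially t2 t1 ev2])
          qed
        qed
        have "l = base P p"
          using unique_min[OF Kconv convC, of l p "base P p"] ls(1) lC lmin base[OF p] by blast
        then have "(y \<circ> s) \<longlonglongrightarrow> base P p" using ls(3) by simp
        from tendstoD[OF this e(1)] obtain N where "\<forall>n\<ge>N. dist ((y \<circ> s) n) (base P p) < e"
          unfolding eventually_sequentially by blast
        then have "dist (y (s N)) (base P p) < e" by simp
        moreover have "e \<le> dist (y (s N)) (base P p)" using r(2) by (simp add: y_def)
        ultimately show False by simp
      qed
    qed
  qed
qed

end
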